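(* Let $n$ be even and $k \geq 2$, and let $\Sigma=\{1,\dots,k\}$. Then the parity language $L^{\mathrm{even}}_{n,k}=\{w \in \Sigma^n: |w|_j \equiv 0 \pmod 2 \text{ for all } j \in \Sigma\}$ requires regular expressions of length $\mathrm{rpn}(L^{\mathrm{even}}_{n,k}) \geq \Omega\big(n^{k-2} (4k \ln k )^{2-k}\big) = n^{k-2} k^{-\Theta(k)}$.
   Context: $|w|_j$ denotes the number of occurrences of the letter $j$ in the word $w$. Regular expressions are built from $\epsilon$ and letters by union and concatenation (no $\emptyset$); $\mathrm{rpn}(L)$ is the minimum number of syntax-tree nodes of an expression describing $L$. *)

theory Defs
  imports Complex_Main
begin

datatype rexp = Eps | Let nat | Union rexp rexp | Conc rexp rexp

fun lang :: "rexp \<Rightarrow> nat list set" where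
  "lang Eps = {[]}"
| "lang (Let a) = {[a]}"
| "lang (Union r s) = lang r \<union> lang s"
| "lang (Conc r s) = {u @ v | u v. u \<in> lang r \<and> v \<in> lang s}"

fun nodes :: "rexp \<Rightarrow> nat" where
  "nodes Eps = 1"
| "nodes (Let a) = 1"
| "nodes (Union r s) = 1 + nodes r + nodes s"
| "nodes (Conc r s) = 1 + nodes r + nodes s"

definition rpn :: "nat list set \<Rightarrow> nat" where
  "rpn L = (LEAST s. \<exists>r. lang r = L \<and> nodes r = s)"

definition L_even :: "nat \<Rightarrow> nat \<Rightarrow> nat list set" where
  "L_even n k = {w. length w = n \<and> set w \<subseteq> {1..k} \<and>
                    (\<forall>j\<in>{1..k}. even (count_list w j))}"

end

theory Submission
  imports Defs
begin


definition W :: "nat \<Rightarrow> nat \<Rightarrow> nat list set" where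
  "W k j = {w. set w \<subseteq> {1..k} \<and> length w = j}"

lemma finite_W: "finite (W k j)"
  unfolding W_def by (rule finite_lists_length_eq) simp

lemma card_W: "card (W k j) = k ^ j"
  unfolding W_def using card_lists_length_eq[of "{1..k}" j] by simp

lemma W_0: "W k 0 = {[]}" by (auto simp: W_def)

lemma W_Suc: "W k (Suc j) = (\<lambda>(x,w). x#w) ` ({1..k} \<times> W k j)"
  by (auto simp: W_def length_Suc_conv image_iff)

definition chi :: "nat set \<Rightarrow> nat list \<Rightarrow> real" where
  "chi S w = (\<Prod>a\<in>S. (-1)^(count_list w a))"

lemma chi_Cons:
  assumes "finite S"
  shows "chi S (x#w) = (if x \<in> S then -1 else 1) * chi S w"
proof -
  have "chi S (x#w) = (\<Prod>a\<in>S. (if x = a then -1 else 1) * (-1::real)^(count_list w a))"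
    unfolding chi_def by (intro prod.cong) auto
  also have "\<dots> = (\<Prod>a\<in>S. (if x = a then -1 else 1::real)) * chi S w"
    unfolding chi_def by (rule prod.distrib)
  also have "(\<Prod>a\<in>S. (if x = a then -1 else 1::real)) = (if x \<in> S then -1 else 1)"
    using prod.delta[OF assms, of x "\<lambda>_. -1::real"] by (simp add: eq_commute)
  finally show ?thesis .
qed

lemma sum_sign:
  assumes "S \<subseteq> {1..k}"
  shows "(\<Sum>x\<in>{1..k}. (if x \<in> S then -1 else 1::real)) = real k - 2 * real (card S)"
proof -
  have fS: "finite S" using assms finite_subset by blast
  have "(\<Sum>x\<in>{1..k}. (if x \<in> S then -1 else 1::real)) =
        (\<Sum>x\<in>{1..k} \<inter> {x. x \<in> S}. -1) + (\<Sum>x\<in>{1..k} \<inter> - {x. x \<in> S}. 1)"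
    by (rule sum.If_cases) simp
  also have "{1..k} \<inter> {x. x \<in> S} = S" using assms by auto
  also have "{1..k} \<inter> - {x. x \<in> S} = {1..k} - S" by auto
  also have "card ({1..k} - S) = k - card S" using assms fS by (simp add: card_Diff_subset)
  moreover have "card S \<le> k" using card_mono[OF _ assms] by simp
  ultimately show ?thesis by (simp add: of_nat_diff)
qed

lemma sum_chi:
  assumes "S \<subseteq> {1..k}"
  shows "(\<Sum>w\<in>W k j. chi S w) = (real k - 2 * real (card S))^j"
proof (induction j)
  case 0
  then show ?case by (simp add: W_0 chi_def)
next
  case (Suc j)
  have fS: "finite S" using assms finite_subset by blast
  have inj: "inj_on (\<lambda>(x,w). x#w) ({1..k} \<times> W k j)" by (auto simp: inj_on_def)
  have "(\<Sum>w\<in>W k (Suc j). chi S w) = (\<Sum>p\<in>{1..k} \<times> W k j. chi S (fst p # snd p))"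
    unfolding W_Suc by (subst sum.reindex[OF inj]) (auto intro!: sum.cong)
  also have "\<dots> = (\<Sum>x\<in>{1..k}. \<Sum>w\<in>W k j. chi S (x # w))"
    unfolding sum.cartesian_product by (simp add: case_prod_unfold)
  also have "\<dots> = (\<Sum>x\<in>{1..k}. (if x \<in> S then -1 else 1) * (\<Sum>w\<in>W k j. chi S w))"
    by (simp add: chi_Cons[OF fS] sum_distrib_left)
  also have "\<dots> = (\<Sum>x\<in>{1..k}. (if x \<in> S then -1 else 1::real)) * (\<Sum>w\<in>W k j. chi S w)"
    by (simp add: sum_distrib_right)
  finally show ?case using Suc sum_sign[OF assms] by simp
qed

definition ok :: "nat \<Rightarrow> (nat \<Rightarrow> nat) \<Rightarrow> nat list \<Rightarrow> bool" where
  "ok k e w = (\<forall>a\<in>{1..k}. even (count_list w a + e a))"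

definition sg :: "(nat \<Rightarrow> nat) \<Rightarrow> nat set \<Rightarrow> real" where
  "sg e S = (\<Prod>a\<in>S. (-1)^(e a))"

lemma ind_expand:
  "(if ok k e w then 2^k else 0::real) = (\<Sum>S\<in>Pow {1..k}. sg e S * chi S w)"
proof -
  let ?t = "\<lambda>a. (-1::real)^(count_list w a + e a)"
  have "(\<Prod>a\<in>{1..k}. ?t a + 1) = (\<Sum>X\<in>Pow {1..k}. (\<Prod>a\<in>X. ?t a) * (\<Prod>a\<in>{1..k}-X. 1))"
    by (rule prod_add) simp
  also have "\<dots> = (\<Sum>S\<in>Pow {1..k}. sg e S * chi S w)"
    by (intro sum.cong refl) (simp add: sg_def chi_def power_add prod.distrib mult.commute)
  finally have eq: "(\<Prod>a\<in>{1..k}. ?t a + 1) = (\<Sum>S\<in>Pow {1..k}. sg e S * chi S w)" .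
  show ?thesis
  proof (cases "ok k e w")
    case True
    then have "(\<Prod>a\<in>{1..k}. ?t a + 1) = (\<Prod>a\<in>{1..k}. 2)"
      by (intro prod.cong) (auto simp: ok_def)
    then show ?thesis using True eq by simp
  next
    case False
    then obtain a where a: "a \<in> {1..k}" "odd (count_list w a + e a)" unfolding ok_def by blast
    then have "?t a + 1 = 0" by simp
    then have z: "(\<Prod>a\<in>{1..k}. ?t a + 1) = 0"
      using a(1) by (intro prod_zero) auto
    from eq z have "(\<Sum>S\<in>Pow {1..k}. sg e S * chi S w) = 0" by linarith
    then show ?thesis using False by simp
  qed
qed

lemma fourier:
  "real (card {w\<in>W k j. ok k e w}) * 2^k = (\<Sum>S\<in>Pow {1..k}. sg e S * (real k - 2 * real (card S))^j)"
proof -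
  have "real (card {w\<in>W k j. ok k e w}) * 2^k = (\<Sum>w\<in>{w\<in>W k j. ok k e w}. 2^k)"
    by simp
  also have "\<dots> = (\<Sum>w\<in>W k j. if ok k e w then 2^k else 0)"
    by (rule sum.inter_filter[OF finite_W])
  also have "\<dots> = (\<Sum>w\<in>W k j. \<Sum>S\<in>Pow {1..k}. sg e S * chi S w)"
    by (simp add: ind_expand)
  also have "\<dots> = (\<Sum>S\<in>Pow {1..k}. \<Sum>w\<in>W k j. sg e S * chi S w)"
    by (rule sum.swap)
  also have "\<dots> = (\<Sum>S\<in>Pow {1..k}. sg e S * (real k - 2 * real (card S))^j)"
    by (intro sum.cong refl) (simp add: sum_distrib_left[symmetric] sum_chi)
  finally show ?thesis .
qed

lemma abs_sg: "\<bar>sg e S\<bar> = 1"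
  unfolding sg_def by (simp add: abs_prod power_abs)

lemma fourier_upper:
  "real (card {w\<in>W k j. ok k e w}) * 2^k \<le> (\<Sum>S\<in>Pow {1..k}. \<bar>real k - 2 * real (card S)\<bar>^j)"
  unfolding fourier
proof (rule sum_mono)
  fix S
  have "sg e S * (real k - 2 * real (card S))^j \<le> \<bar>sg e S * (real k - 2 * real (card S))^j\<bar>"
    by simp
  also have "\<dots> = \<bar>real k - 2 * real (card S)\<bar>^j" by (simp add: abs_mult abs_sg power_abs)
  finally show "sg e S * (real k - 2 * real (card S))^j \<le> \<bar>real k - 2 * real (card S)\<bar>^j" .
qed

lemma fourier_lower:
  assumes "even j" "k \<ge> 1"
  shows "2 * real k ^ j \<le> real (card {w\<in>W k j. ok k (\<lambda>_. 0) w}) * 2^k"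
proof -
  have sg0: "sg (\<lambda>_. 0) S = 1" for S by (simp add: sg_def)
  have ne: "{} \<noteq> {1..k}" using assms by auto
  have "2 * real k ^ j = (\<Sum>S\<in>{{}, {1..k}}. (real k - 2 * real (card S))^j)"
    using ne assms(1) by (simp add: algebra_simps)
  also have "\<dots> \<le> (\<Sum>S\<in>Pow {1..k}. (real k - 2 * real (card S))^j)"
    by (rule sum_mono2) (auto intro: zero_le_even_power[OF assms(1)])
  also have "\<dots> = real (card {w\<in>W k j. ok k (\<lambda>_. 0) w}) * 2^k"
    unfolding fourier sg0 by simp
  finally show ?thesis .
qed

lemma abs_bound:
  assumes "s \<le> k" "k \<ge> 1"
  shows "\<bar>real k - 2 * real s\<bar>^j \<le> real k ^ j *
    (exp (-2 * real j / real k) ^ s + exp (-2 * real j / real k) ^ (k - s))"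
proof -
  have kp: "real k > 0" using assms by simp
  have eq1: "\<bar>real k - 2 * real s\<bar> = real k * \<bar>1 - 2 * real s / real k\<bar>"
    using kp by (simp add: abs_mult[symmetric] field_simps)
  have ex: "exp (-2 * real j / real k) ^ n = exp (-2 * real n / real k) ^ j" for n
    by (simp add: exp_of_nat_mult[symmetric] mult_ac)
  have "\<bar>1 - 2 * real s / real k\<bar>^j \<le>
     exp (-2 * real s / real k) ^ j + exp (-2 * real (k - s) / real k) ^ j"
  proof (cases "2 * s \<le> k")
    case True
    have a: "0 \<le> 1 - 2 * real s / real k" using True kp by (simp add: field_simps)
    have b: "1 - 2 * real s / real k \<le> exp (-2 * real s / real k)"
      using exp_ge_add_one_self[of "-2 * real s / real k"] by simp
    have "\<bar>1 - 2 * real s / real k\<bar>^j \<le> exp (-2 * real s / real k) ^ j"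
      using a b by (simp add: power_mono)
    then show ?thesis by (smt (verit) zero_le_power exp_gt_zero)
  next
    case False
    have e: "\<bar>1 - 2 * real s / real k\<bar> = 1 + (-2 * real (k - s) / real k)"
      using False kp assms(1) by (simp add: field_simps of_nat_diff)
    have a: "0 \<le> 1 + (-2 * real (k - s) / real k)" using False kp assms(1) by (simp add: field_simps of_nat_diff)
    have b: "1 + (-2 * real (k - s) / real k) \<le> exp (-2 * real (k - s) / real k)"
      by (rule exp_ge_add_one_self)
    have "\<bar>1 - 2 * real s / real k\<bar>^j \<le> exp (-2 * real (k - s) / real k) ^ j"
      unfolding e using a b by (simp add: power_mono)
    then show ?thesis by (smt (verit) zero_le_power exp_gt_zero)
  qed
  then show ?thesis unfolding eq1 power_mult_distrib ex
    using kp by (simp add: mult_left_mono)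
qed

lemma sum_pow_card:
  assumes "finite A"
  shows "(\<Sum>X\<in>Pow A. (q::real) ^ card X) = (1 + q) ^ card A"
    and "(\<Sum>X\<in>Pow A. (q::real) ^ (card A - card X)) = (1 + q) ^ card A"
proof -
  have "(\<Prod>x\<in>A. q + 1) = (\<Sum>X\<in>Pow A. (\<Prod>x\<in>X. q) * (\<Prod>x\<in>A-X. 1))"
    by (rule prod_add[OF assms])
  then show "(\<Sum>X\<in>Pow A. (q::real) ^ card X) = (1 + q) ^ card A"
    by (simp add: add.commute)
  have "(\<Prod>x\<in>A. 1 + q) = (\<Sum>X\<in>Pow A. (\<Prod>x\<in>X. 1) * (\<Prod>x\<in>A-X. q))"
    by (rule prod_add[OF assms])
  also have "\<dots> = (\<Sum>X\<in>Pow A. q ^ (card A - card X))"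
    by (intro sum.cong refl) (auto simp: card_Diff_subset finite_subset[OF _ assms])
  finally show "(\<Sum>X\<in>Pow A. (q::real) ^ (card A - card X)) = (1 + q) ^ card A" by simp
qed

lemma gamma_bound:
  assumes "k \<ge> 1"
  shows "(\<Sum>S\<in>Pow {1..k}. \<bar>real k - 2 * real (card S)\<bar>^j) \<le>
     2 * real k ^ j * (1 + exp (-2 * real j / real k)) ^ k"
proof -
  let ?q = "exp (-2 * real j / real k)"
  have "(\<Sum>S\<in>Pow {1..k}. \<bar>real k - 2 * real (card S)\<bar>^j) \<le>
        (\<Sum>S\<in>Pow {1..k}. real k ^ j * (?q ^ card S + ?q ^ (card {1..k} - card S)))"
  proof (rule sum_mono)
    fix S assume "S \<in> Pow {1..k}"
    then have "card S \<le> k" using card_mono[of "{1..k}" S] by auto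
    then show "\<bar>real k - 2 * real (card S)\<bar>^j \<le> real k ^ j * (?q ^ card S + ?q ^ (card {1..k} - card S))"
      using abs_bound[OF _ assms] by simp
  qed
  also have "\<dots> = real k ^ j * ((\<Sum>S\<in>Pow {1..k}. ?q ^ card S) + (\<Sum>S\<in>Pow {1..k}. ?q ^ (card {1..k} - card S)))"
    by (simp add: sum_distrib_left[symmetric] sum.distrib)
  also have "\<dots> = 2 * real k ^ j * (1 + ?q) ^ k"
    using sum_pow_card[of "{1..k}" ?q] by simp
  finally show ?thesis .
qed

definition phom :: "nat list set \<Rightarrow> bool" where
  "phom A = (\<forall>u\<in>A. \<forall>v\<in>A. \<forall>a. even (count_list u a) = even (count_list v a))"

lemma dens_gamma:
  assumes "A \<subseteq> W k j" "phom A" "k \<ge> 1"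
  shows "real (card A) \<le> real k ^ j * ((1 + exp (-2 * real j / real k)) ^ k / 2 ^ (k - 1))"
proof (cases "A = {}")
  case True
  then show ?thesis by simp
next
  case False
  then obtain w0 where w0: "w0 \<in> A" by blast
  have sub: "A \<subseteq> {w\<in>W k j. ok k (count_list w0) w}"
  proof
    fix w assume w: "w \<in> A"
    have "\<forall>a. even (count_list w a) = even (count_list w0 a)"
      using assms(2) w w0 unfolding phom_def by blast
    then show "w \<in> {w\<in>W k j. ok k (count_list w0) w}"
      using w assms(1) unfolding ok_def by auto
  qed
  have "card A \<le> card {w\<in>W k j. ok k (count_list w0) w}"
    by (rule card_mono[OF _ sub]) (simp add: finite_W)
  then have "real (card A) * 2^k \<le> real (card {w\<in>W k j. ok k (count_list w0) w}) * 2^k"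
    by simp
  also have "\<dots> \<le> 2 * real k ^ j * (1 + exp (-2 * real j / real k)) ^ k"
    using fourier_upper gamma_bound[OF assms(3)] order_trans by blast
  finally have "real (card A) * 2^k \<le> 2 * real k ^ j * (1 + exp (-2 * real j / real k)) ^ k" .
  moreover have "(2::real)^k = 2 * 2^(k-1)" using assms(3)
    by (simp add: power_Suc[symmetric])
  ultimately show ?thesis by (simp add: field_simps)
qed

lemma dens_k:
  assumes "A \<subseteq> W k j" "phom A" "j \<ge> 1"
  shows "card A \<le> k ^ (j - 1)"
proof -
  have inj: "inj_on butlast A"
  proof (rule inj_onI)
    fix u v assume u: "u \<in> A" and v: "v \<in> A" and b: "butlast u = butlast v"
    have lu: "length u = j" "length v = j" using u v assms(1) by (auto simp: W_def)
    then have ne: "u \<noteq> []" "v \<noteq> []" using assms(3) by auto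
    have eu1: "u = butlast u @ [last u]" using ne by simp
    have eu2: "v = butlast u @ [last v]" using ne b by simp
    note eu = eu1 eu2
    have "even (count_list u (last u)) = even (count_list v (last u))"
      using u v assms(2) unfolding phom_def by blast
    then have "last v = last u"
      by (subst (asm) eu(1), subst (asm) eu(2)) (simp split: if_splits)
    then show "u = v" using eu by simp
  qed
  have "butlast ` A \<subseteq> W k (j - 1)"
    using assms(1) by (auto simp: W_def dest: in_set_butlastD)
  then have "card A \<le> card (W k (j - 1))"
    using card_inj_on_le[OF inj _ finite_W] by blast
  then show ?thesis by (simp add: card_W)
qed


definition beta :: "nat \<Rightarrow> nat \<Rightarrow> real" where
  "beta k j = (if j = 0 then 1 else min (1 / real k) ((1 + exp (-2 * real j / real k)) ^ k / 2 ^ (k - 1)))"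

lemma beta_pos: "k \<ge> 1 \<Longrightarrow> 0 < beta k j"
  unfolding beta_def by (auto intro!: divide_pos_pos zero_less_power add_pos_pos)

lemma beta_le1: "k \<ge> 1 \<Longrightarrow> beta k j \<le> 1"
  unfolding beta_def by (auto simp: min_le_iff_disj field_simps)

lemma dens:
  assumes "A \<subseteq> W k j" "phom A" "k \<ge> 1"
  shows "real (card A) \<le> beta k j * real k ^ j"
proof (cases "j = 0")
  case True
  then have "card A \<le> card (W k 0)" using assms(1) by (intro card_mono[OF finite_W]) auto
  then show ?thesis using True by (simp add: beta_def card_W)
next
  case False
  have a: "real (card A) \<le> real k ^ j * ((1 + exp (-2 * real j / real k)) ^ k / 2 ^ (k - 1))"
    by (rule dens_gamma[OF assms])
  have "card A \<le> k ^ (j - 1)" using dens_k[OF assms(1,2)] False by simp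
  then have "real (card A) \<le> real k ^ (j - 1)" by (metis of_nat_le_iff of_nat_power)
  also have "real k ^ (j - 1) = real k ^ j / real k" using False assms(3)
    by (metis Suc_diff_1 bot_nat_0.not_eq_extremum nonzero_mult_div_cancel_left of_nat_0_le_iff
        of_nat_le_0_iff power_Suc not_one_le_zero)
  finally have b: "real (card A) \<le> real k ^ j * (1 / real k)" by simp
  show ?thesis using a b False by (simp add: beta_def min_def mult.commute)
qed

lemma lang_Conc_image: "lang (Conc r s) = (\<lambda>(u,v). u @ v) ` (lang r \<times> lang s)"
  by auto

lemma lang_fin: "finite (lang r)"
  by (induction r) (auto simp: lang_Conc_image simp del: lang.simps(4))

lemma lang_ne: "lang r \<noteq> {}"
  by (induction r) auto

lemma phom_mono: "A \<subseteq> B \<Longrightarrow> phom B \<Longrightarrow> phom A"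
  unfolding phom_def by blast

lemma main:
  assumes k: "k \<ge> 1" and G0: "G 0 \<le> 1" and G1: "G 1 \<le> real k" and Gnn: "\<And>m. G m \<ge> 0"
    and rec: "\<And>m1 m2. G (m1 + m2) \<le> G m1 / beta k m2 + G m2 / beta k m1"
  shows "lang r \<subseteq> W k m \<Longrightarrow> phom (lang r) \<Longrightarrow> real (card (lang r)) * G m \<le> real (nodes r) * real k ^ m"
proof (induction r arbitrary: m)
  case Eps
  then have "m = 0" by (auto simp: W_def)
  then show ?case using G0 by simp
next
  case (Let a)
  then have "m = 1" by (auto simp: W_def)
  then show ?case using G1 by simp
next
  case (Union r s)
  have p1: "phom (lang r)" "phom (lang s)" using Union.prems(2) phom_mono[of _ "lang (Union r s)"] by auto
  have s1: "lang r \<subseteq> W k m" "lang s \<subseteq> W k m" using Union.prems(1) by auto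
  have "card (lang (Union r s)) \<le> card (lang r) + card (lang s)" by (simp add: card_Un_le)
  then have "real (card (lang (Union r s))) * G m \<le> (real (card (lang r)) + real (card (lang s))) * G m"
    using Gnn by (intro mult_right_mono) auto
  also have "\<dots> \<le> real (nodes r) * real k ^ m + real (nodes s) * real k ^ m"
    using Union.IH(1)[OF s1(1) p1(1)] Union.IH(2)[OF s1(2) p1(2)] by (simp add: distrib_right)
  also have "\<dots> \<le> real (nodes (Union r s)) * real k ^ m" by (simp add: distrib_right)
  finally show ?case .
next
  case (Conc r s)
  let ?A = "lang r" and ?B = "lang s" and ?C = "lang (Conc r s)"
  obtain a0 where a0: "a0 \<in> ?A" using lang_ne by blast
  obtain b0 where b0: "b0 \<in> ?B" using lang_ne by blast
  define m1 where "m1 = length a0"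
  define m2 where "m2 = length b0"
  have inC: "u @ v \<in> ?C" if "u \<in> ?A" "v \<in> ?B" for u v using that by auto
  have "a0 @ b0 \<in> W k m" using inC[OF a0 b0] Conc.prems(1) by blast
  then have mm: "m = m1 + m2" by (simp add: W_def m1_def m2_def)
  have sA: "?A \<subseteq> W k m1"
  proof
    fix u assume "u \<in> ?A"
    then have "u @ b0 \<in> W k m" using inC[OF _ b0] Conc.prems(1) by blast
    then show "u \<in> W k m1" using mm by (auto simp: W_def m2_def)
  qed
  have sB: "?B \<subseteq> W k m2"
  proof
    fix u assume "u \<in> ?B"
    then have "a0 @ u \<in> W k m" using inC[OF a0] Conc.prems(1) by blast
    then show "u \<in> W k m2" using mm by (auto simp: W_def m1_def)
  qed
  have pA: "phom ?A" unfolding phom_def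
  proof (intro ballI allI)
    fix u u' a assume "u \<in> ?A" "u' \<in> ?A"
    then have "even (count_list (u @ b0) a) = even (count_list (u' @ b0) a)"
      using inC[OF _ b0] Conc.prems(2) unfolding phom_def by blast
    then show "even (count_list u a) = even (count_list u' a)" by (simp, blast)
  qed
  have pB: "phom ?B" unfolding phom_def
  proof (intro ballI allI)
    fix u u' a assume "u \<in> ?B" "u' \<in> ?B"
    then have "even (count_list (a0 @ u) a) = even (count_list (a0 @ u') a)"
      using inC[OF a0] Conc.prems(2) unfolding phom_def by blast
    then show "even (count_list u a) = even (count_list u' a)" by (simp, blast)
  qed
  have cC: "card ?C \<le> card ?A * card ?B"
    unfolding lang_Conc_image
    by (metis card_cartesian_product card_image_le finite_cartesian_product lang_fin)
  define cA where "cA = real (card ?A)"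
  define cB where "cB = real (card ?B)"
  define b1 where "b1 = beta k m1"
  define b2 where "b2 = beta k m2"
  define K1 where "K1 = real k ^ m1"
  define K2 where "K2 = real k ^ m2"
  have b1p: "b1 > 0" and b2p: "b2 > 0" using beta_pos[OF k] by (auto simp: b1_def b2_def)
  have dA: "cA \<le> b1 * K1" using dens[OF sA pA k] by (simp add: cA_def b1_def K1_def)
  have dB: "cB \<le> b2 * K2" using dens[OF sB pB k] by (simp add: cB_def b2_def K2_def)
  have IA: "cA * G m1 \<le> real (nodes r) * K1" using Conc.IH(1)[OF sA pA] by (simp add: cA_def K1_def)
  have IB: "cB * G m2 \<le> real (nodes s) * K2" using Conc.IH(2)[OF sB pB] by (simp add: cB_def K2_def)
  have R: "G m \<le> G m1 / b2 + G m2 / b1" using rec[of m1 m2] mm by (simp add: b1_def b2_def)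
  have cAn: "cA \<ge> 0" "cB \<ge> 0" "K1 \<ge> 0" "K2 \<ge> 0" by (auto simp: cA_def cB_def K1_def K2_def)
  have "real (card ?C) \<le> cA * cB" unfolding cA_def cB_def using cC by (metis of_nat_le_iff of_nat_mult)
  then have "real (card ?C) * G m \<le> (cA * cB) * G m"
    using Gnn[of m] by (intro mult_right_mono)
  also have "\<dots> \<le> (cA * cB) * (G m1 / b2 + G m2 / b1)"
    using R cAn by (intro mult_left_mono) auto
  also have "\<dots> = (cA * G m1) * (cB / b2) + (cB * G m2) * (cA / b1)"
    by (simp add: field_simps)
  also have "\<dots> \<le> (real (nodes r) * K1) * K2 + (real (nodes s) * K2) * K1"
  proof (rule add_mono)
    have "cB / b2 \<le> K2" using dB b2p by (simp add: field_simps)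
    then show "(cA * G m1) * (cB / b2) \<le> (real (nodes r) * K1) * K2"
      using IA cAn Gnn[of m1] b2p by (intro mult_mono[OF IA]) auto
    have "cA / b1 \<le> K1" using dA b1p by (simp add: field_simps)
    then show "(cB * G m2) * (cA / b1) \<le> (real (nodes s) * K2) * K1"
      using IB cAn Gnn[of m2] b1p by (intro mult_mono[OF IB]) auto
  qed
  also have "\<dots> \<le> real (nodes (Conc r s)) * real k ^ m"
    using cAn by (simp add: mm K1_def K2_def power_add algebra_simps)
  finally show ?case .
qed



lemma beta_le_k: "j \<ge> 1 \<Longrightarrow> beta k j \<le> 1 / real k"
  unfolding beta_def by simp

lemma beta_le_gamma: "j \<ge> 1 \<Longrightarrow> beta k j \<le> (1 + exp (-2 * real j / real k)) ^ k / 2 ^ (k - 1)"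
  unfolding beta_def by simp

lemma exp1_le3: "exp (1::real) \<le> 3" by (rule exp_le)

lemma ln3_ge1: "ln (3::real) \<ge> 1"
  using exp1_le3 ln_le_cancel_iff[of "exp 1" 3] by simp

lemma exp1_ge: "exp (1::real) \<ge> 5/2"
proof -
  have "1 + 1 + 1\<^sup>2 / 2 \<le> exp (1::real)" by (rule exp_lower_Taylor_quadratic) simp
  then show ?thesis by (simp add: power2_eq_square)
qed

lemma beta_big:
  assumes k: "k \<ge> 3" and j: "j \<ge> 1" and jJ: "real j \<ge> real k / 2 * ln (real k)"
  shows "beta k j * 2 ^ (k - 3) \<le> 1"
proof -
  have kp: "real k > 0" using k by simp
  have "-2 * real j / real k \<le> - ln (real k)"
    using jJ kp by (simp add: field_simps)
  then have "exp (-2 * real j / real k) \<le> exp (- ln (real k))" by simp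
  also have "exp (- ln (real k)) = 1 / real k"
    using kp exp_ln[OF kp] exp_minus[of "ln (real k)"] by (simp add: divide_inverse)
  finally have q: "exp (-2 * real j / real k) \<le> 1 / real k" .
  have "(1 + exp (-2 * real j / real k)) ^ k \<le> (1 + 1 / real k) ^ k"
    by (rule power_mono) (use q in simp_all)
  also have "\<dots> \<le> exp (1 / real k) ^ k"
  proof (rule power_mono)
    show "1 + 1 / real k \<le> exp (1 / real k)" by (rule exp_ge_add_one_self)
    show "0 \<le> 1 + 1 / real k" by simp
  qed
  also have "exp (1 / real k) ^ k = exp (real k * (1 / real k))"
    by (rule exp_of_nat_mult[symmetric])
  also have "real k * (1 / real k) = 1" using kp by simp
  also have "exp 1 \<le> (4::real)" using exp1_le3 by simp
  finally have g: "(1 + exp (-2 * real j / real k)) ^ k \<le> 4" .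
  have p: "(2::real) ^ (k - 1) = 4 * 2 ^ (k - 3)"
  proof -
    define t where "t = k - 3"
    have t: "k = t + 3" using k by (simp add: t_def)
    show ?thesis unfolding t by (simp add: power_add)
  qed
  have "beta k j * 2 ^ (k - 3) \<le> (1 + exp (-2 * real j / real k)) ^ k / 2 ^ (k - 1) * 2 ^ (k - 3)"
    using beta_le_gamma[OF j] by (rule mult_right_mono) simp
  also have "\<dots> = (1 + exp (-2 * real j / real k)) ^ k / 4"
    unfolding p by simp
  also have "\<dots> \<le> 1" using g by simp
  finally show ?thesis .
qed

lemma powmean2:
  fixes a b :: real
  assumes "a \<ge> 0" "b \<ge> 0"
  shows "2 * ((a + b) / 2) ^ n \<le> a ^ n + b ^ n"
proof (induction n)
  case 0
  then show ?case by simp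
next
  case (Suc n)
  have nn: "0 \<le> (a ^ n - b ^ n) * (a - b)"
  proof (cases "a \<le> b")
    case True
    then have "a ^ n \<le> b ^ n" using assms by (intro power_mono) auto
    then show ?thesis using True by (intro mult_nonpos_nonpos) auto
  next
    case False
    then have "b ^ n \<le> a ^ n" using assms by (intro power_mono) auto
    then show ?thesis using False by (intro mult_nonneg_nonneg) auto
  qed
  have e1: "(a ^ n - b ^ n) * (a - b) = a ^ Suc n + b ^ Suc n - (a ^ n * b + b ^ n * a)"
    by (simp only: power_Suc) (simp add: algebra_simps)
  have e2: "(a ^ n + b ^ n) * ((a + b) / 2) = (a ^ Suc n + b ^ Suc n + (a ^ n * b + b ^ n * a)) / 2"
    by (simp only: power_Suc) (simp add: algebra_simps add_divide_distrib)
  have key: "a ^ n * b + b ^ n * a \<le> a ^ Suc n + b ^ Suc n" using nn e1 by linarith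
  have "2 * ((a + b) / 2) ^ Suc n = (2 * ((a + b) / 2) ^ n) * ((a + b) / 2)" by (simp only: power_Suc) simp
  also have "\<dots> \<le> (a ^ n + b ^ n) * ((a + b) / 2)"
    using Suc assms by (intro mult_right_mono) auto
  also have "(a ^ n + b ^ n) * ((a + b) / 2) \<le> a ^ Suc n + b ^ Suc n" unfolding e2 using key by simp
  finally show ?case .
qed

lemma powmean:
  fixes a b :: real
  assumes "a \<ge> 0" "b \<ge> 0" "n \<ge> 1"
  shows "(a + b) ^ n \<le> 2 ^ (n - 1) * (a ^ n + b ^ n)"
proof -
  have "(a + b) ^ n = 2 ^ n * ((a + b) / 2) ^ n" by (simp add: power_divide)
  also have "\<dots> = 2 ^ (n - 1) * (2 * ((a + b) / 2) ^ n)"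
  proof -
    define t where "t = n - 1"
    have t: "n = t + 1" using assms(3) by (simp add: t_def)
    show ?thesis unfolding t by simp
  qed
  also have "\<dots> \<le> 2 ^ (n - 1) * (a ^ n + b ^ n)"
    using powmean2[OF assms(1,2)] by (intro mult_left_mono) auto
  finally show ?thesis .
qed

lemma caseb:
  assumes k: "k \<ge> 3" and m: "m1 \<ge> 1" "m2 \<ge> 1"
    and b1: "beta k m1 * 2 ^ (k - 3) \<le> 1" and b2: "beta k m2 * 2 ^ (k - 3) \<le> 1"
  shows "real (m1 + m2) ^ (k - 2) \<le> real m1 ^ (k - 2) / beta k m2 + real m2 ^ (k - 2) / beta k m1"
proof -
  have bp1: "beta k m1 > 0" and bp2: "beta k m2 > 0" using beta_pos k by auto
  have i1: "2 ^ (k - 3) \<le> 1 / beta k m1" using b1 bp1 by (simp add: field_simps)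
  have i2: "2 ^ (k - 3) \<le> 1 / beta k m2" using b2 bp2 by (simp add: field_simps)
  have e: "k - 2 - 1 = k - 3" by simp
  have "real (m1 + m2) ^ (k - 2) \<le> 2 ^ (k - 3) * (real m1 ^ (k - 2) + real m2 ^ (k - 2))"
    using powmean[of "real m1" "real m2" "k - 2"] k by (simp add: e)
  also have "\<dots> = real m1 ^ (k - 2) * 2 ^ (k - 3) + real m2 ^ (k - 2) * 2 ^ (k - 3)"
    by (simp add: algebra_simps)
  also have "\<dots> \<le> real m1 ^ (k - 2) * (1 / beta k m2) + real m2 ^ (k - 2) * (1 / beta k m1)"
    using i1 i2 by (intro add_mono mult_left_mono) auto
  finally show ?thesis by simp
qed

lemma casea:
  assumes k: "k \<ge> 1" and b: "beta k m2 \<le> (real m1 / real (m1 + m2)) ^ (k - 2)" and m: "m1 \<ge> 1"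
  shows "real (m1 + m2) ^ (k - 2) \<le> real m1 ^ (k - 2) / beta k m2 + real m2 ^ (k - 2) / beta k m1"
proof -
  have bp: "beta k m2 > 0" "beta k m1 > 0" using beta_pos[OF k] by auto
  have mp: "real (m1 + m2) > 0" using m by simp
  have "real (m1 + m2) ^ (k - 2) * beta k m2 \<le> real (m1 + m2) ^ (k - 2) * (real m1 / real (m1 + m2)) ^ (k - 2)"
    using b by (intro mult_left_mono) auto
  also have "\<dots> = real m1 ^ (k - 2)" using mp by (simp add: power_divide)
  finally have "real (m1 + m2) ^ (k - 2) \<le> real m1 ^ (k - 2) / beta k m2"
    using bp by (simp add: field_simps)
  moreover have "0 \<le> real m2 ^ (k - 2) / beta k m1" using bp by simp
  ultimately show ?thesis by linarith
qed

definition H :: "nat \<Rightarrow> real \<Rightarrow> bool" where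
  "H k M = (\<forall>m1 m2. 1 \<le> m1 \<longrightarrow> 1 \<le> m2 \<longrightarrow> M \<le> real (m1 + m2) \<longrightarrow>
      real (m1 + m2) ^ (k - 2) \<le> real m1 ^ (k - 2) / beta k m2 + real m2 ^ (k - 2) / beta k m1)"

lemma H_half:
  assumes "\<And>m1 m2. 1 \<le> m2 \<Longrightarrow> m2 \<le> m1 \<Longrightarrow> M \<le> real (m1 + m2) \<Longrightarrow>
      real (m1 + m2) ^ (k - 2) \<le> real m1 ^ (k - 2) / beta k m2 + real m2 ^ (k - 2) / beta k m1"
  shows "H k M"
  unfolding H_def
proof (intro allI impI)
  fix m1 m2 :: nat assume a: "1 \<le> m1" "1 \<le> m2" "M \<le> real (m1 + m2)"
  show "real (m1 + m2) ^ (k - 2) \<le> real m1 ^ (k - 2) / beta k m2 + real m2 ^ (k - 2) / beta k m1"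
  proof (cases "m2 \<le> m1")
    case True
    then show ?thesis using assms a by simp
  next
    case False
    have "real (m2 + m1) ^ (k - 2) \<le> real m2 ^ (k - 2) / beta k m1 + real m1 ^ (k - 2) / beta k m2"
      using assms[of m1 m2] False a by (simp add: add.commute)
    then show ?thesis by (simp add: add.commute)
  qed
qed

lemma ln_le_self: "k \<ge> 1 \<Longrightarrow> ln (real k) \<le> real k"
  using ln_le_minus_one[of "real k"] by simp

lemma H_small:
  assumes k: "k \<ge> 3"
  shows "H k (real k ^ 3)"
proof (rule H_half)
  fix m1 m2 :: nat assume m2: "1 \<le> m2" and le: "m2 \<le> m1" and M: "real k ^ 3 \<le> real (m1 + m2)"
  have m1: "1 \<le> m1" using m2 le by simp
  show "real (m1 + m2) ^ (k - 2) \<le> real m1 ^ (k - 2) / beta k m2 + real m2 ^ (k - 2) / beta k m1"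
  proof (cases "real m2 \<ge> real k / 2 * ln (real k)")
    case True
    have "real m1 \<ge> real k / 2 * ln (real k)" using True le by linarith
    then show ?thesis using caseb[OF k m1 m2 beta_big[OF k m1] beta_big[OF k m2 True]] by simp
  next
    case False
    have kp: "real k \<ge> 3" using k by simp
    define m where "m = real (m1 + m2)"
    define x where "x = real m2 / m"
    have mpos: "m > 0" using m2 by (simp add: m_def)
    have x0: "0 \<le> x" using mpos by (simp add: x_def)
    have "real m2 \<le> real k / 2 * ln (real k)" using False by simp
    also have "\<dots> \<le> real k / 2 * real k" using ln_le_self[of k] k by (intro mult_left_mono) auto
    finally have m2b: "real m2 \<le> real k * real k / 2" by simp
    have "x \<le> (real k * real k / 2) / real k ^ 3"
      unfolding x_def m_def using m2b M mpos m_def k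
      by (intro frac_le) auto
    also have "\<dots> = 1 / (2 * real k)" using kp by (simp add: power3_eq_cube field_simps)
    finally have xb: "x \<le> 1 / (2 * real k)" .
    have Dx: "real (k - 2) * x \<le> 1 / 2"
    proof -
      have "real (k - 2) * x \<le> real k * (1 / (2 * real k))"
        using xb x0 by (intro mult_mono) auto
      then show ?thesis using kp by simp
    qed
    have "1 / (2 * real k) \<le> 1" using kp by simp
    then have x1: "x \<le> 1" using xb by linarith
    have "1 + real (k - 2) * (-x) \<le> (1 + (-x)) ^ (k - 2)"
      by (rule Bernoulli_inequality) (use x1 in simp)
    then have "1 / 2 \<le> (1 - x) ^ (k - 2)" using Dx by simp
    moreover have "1 - x = real m1 / real (m1 + m2)"
      using mpos unfolding x_def m_def by (simp add: field_simps)
    moreover have "beta k m2 \<le> 1 / 2"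
    proof -
      have "1 / real k \<le> 1 / 2" using kp by (simp add: field_simps)
      then show ?thesis using beta_le_k[OF m2, of k] by linarith
    qed
    ultimately have "beta k m2 \<le> (real m1 / real (m1 + m2)) ^ (k - 2)" by simp
    then show ?thesis using casea[of k m2 m1] k m1 by simp
  qed
qed

lemma expbound:
  fixes x :: real
  assumes "0 \<le> x" "x \<le> 1/4"
  shows "exp (-(3/2) * real n * x) \<le> (1 - x) ^ n"
proof -
  have l: "- x - 2 * x\<^sup>2 \<le> ln (1 - x)" by (rule ln_one_minus_pos_lower_bound) (use assms in auto)
  have "x * x \<le> x * (1/4)" using assms by (intro mult_left_mono) auto
  then have "2 * x\<^sup>2 \<le> x / 2" by (simp add: power2_eq_square)
  then have "-(3/2) * x \<le> ln (1 - x)" using l by linarith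
  then have "real n * (-(3/2) * x) \<le> real n * ln (1 - x)" by (intro mult_left_mono) auto
  then have "exp (-(3/2) * real n * x) \<le> exp (real n * ln (1 - x))" by (simp add: mult_ac)
  also have "\<dots> = exp (ln (1 - x)) ^ n" by (rule exp_of_nat_mult)
  also have "exp (ln (1 - x)) = 1 - x" using assms by simp
  finally show ?thesis .
qed

lemma gamma_mid:
  assumes k: "k \<ge> 1" and j: "2 * j \<le> k"
  shows "(1 + exp (-2 * real j / real k)) ^ k / 2 ^ (k - 1) \<le> 2 * exp (- real j / 2)"
proof -
  define y where "y = 2 * real j / real k"
  have kp: "real k > 0" using k by simp
  have y0: "0 \<le> y" and y1: "y \<le> 1" using j kp by (auto simp: y_def field_simps)
  have t: "1 + y + y\<^sup>2 / 2 \<le> exp y" by (rule exp_lower_Taylor_quadratic) (rule y0)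
  have "1 \<le> (1 - y / 2) * (1 + y + y\<^sup>2 / 2)"
  proof -
    have "(1 - y / 2) * (1 + y + y\<^sup>2 / 2) = 1 + y / 2 - y * y * y / 4"
      by (simp add: power2_eq_square field_simps)
    moreover have "y * y * y \<le> 2 * y"
    proof -
      have "y * y \<le> 1" using y0 y1 by (simp add: mult_le_one)
      then have "y * y * y \<le> 1 * y" using y0 by (intro mult_right_mono) auto
      then show ?thesis using y0 by linarith
    qed
    ultimately show ?thesis by linarith
  qed
  also have "\<dots> \<le> (1 - y / 2) * exp y" using t y1 by (intro mult_left_mono) auto
  finally have "1 \<le> (1 - y / 2) * exp y" .
  then have ey: "exp (- y) \<le> 1 - y / 2" by (simp add: exp_minus field_simps)
  have "1 + exp (- y) \<le> 2 * (1 + (- y / 4))" using ey by simp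
  also have "\<dots> \<le> 2 * exp (- y / 4)" using exp_ge_add_one_self[of "- y / 4"] by simp
  finally have b: "1 + exp (- y) \<le> 2 * exp (- y / 4)" .
  have "(1 + exp (- y)) ^ k \<le> (2 * exp (- y / 4)) ^ k"
    by (rule power_mono[OF b]) (simp add: add_nonneg_nonneg)
  also have "\<dots> = 2 ^ k * exp (real k * (- y / 4))" by (simp only: power_mult_distrib exp_of_nat_mult)
  also have "real k * (- y / 4) = - real j / 2" using kp by (simp add: y_def field_simps)
  finally have c: "(1 + exp (- y)) ^ k \<le> 2 ^ k * exp (- real j / 2)" .
  have p: "(2::real) ^ k = 2 * 2 ^ (k - 1)"
  proof -
    define t where "t = k - 1"
    have t: "k = t + 1" using k by (simp add: t_def)
    show ?thesis unfolding t by simp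
  qed
  have "-2 * real j / real k = - y" by (simp add: y_def)
  then show ?thesis using c unfolding p by (simp add: field_simps)
qed

lemma gamma_far:
  assumes k: "k \<ge> 1" and j: "k \<le> 2 * j"
  shows "(1 + exp (-2 * real j / real k)) ^ k / 2 ^ (k - 1) \<le> 2 * (7 / 10) ^ k"
proof -
  have kp: "real k > 0" using k by simp
  have "-2 * real j / real k \<le> -1" using j kp by (simp add: field_simps)
  then have "exp (-2 * real j / real k) \<le> exp (-1)" by simp
  also have "exp (-1::real) \<le> 2 / 5"
    using exp1_ge by (simp add: exp_minus field_simps)
  finally have e: "exp (-2 * real j / real k) \<le> 2 / 5" .
  have "(1 + exp (-2 * real j / real k)) ^ k \<le> (7 / 5) ^ k"
    by (rule power_mono) (use e in auto)
  also have "(7 / 5 :: real) ^ k = 2 ^ k * (7 / 10) ^ k" by (simp add: power_mult_distrib[symmetric])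
  finally have c: "(1 + exp (-2 * real j / real k)) ^ k \<le> 2 ^ k * (7 / 10) ^ k" .
  have p: "(2::real) ^ k = 2 * 2 ^ (k - 1)"
  proof -
    define t where "t = k - 1"
    have t: "k = t + 1" using k by (simp add: t_def)
    show ?thesis unfolding t by simp
  qed
  show ?thesis using c unfolding p by (simp add: field_simps)
qed

lemma ln_k4:
  assumes "k \<ge> 81"
  shows "ln (real k) \<ge> 4"
proof -
  have "ln ((3::real) ^ 4) = real 4 * ln 3" by (rule ln_realpow)
  then have "ln (81::real) = 4 * ln 3" by simp
  then have "ln (81::real) \<ge> 4" using ln3_ge1 by simp
  moreover have "ln (81::real) \<le> ln (real k)" using assms by simp
  ultimately show ?thesis by linarith
qed

lemma H_large:
  assumes k: "k \<ge> 81"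
  shows "H k (2 * real k * ln (real k))"
proof (rule H_half)
  fix m1 m2 :: nat assume m2: "1 \<le> m2" and le: "m2 \<le> m1" and M: "2 * real k * ln (real k) \<le> real (m1 + m2)"
  have k3: "k \<ge> 3" using k by simp
  have m1: "1 \<le> m1" using m2 le by simp
  define L where "L = ln (real k)"
  have L4: "L \<ge> 4" using ln_k4[OF k] by (simp add: L_def)
  have kp: "real k \<ge> 81" using k by simp
  show "real (m1 + m2) ^ (k - 2) \<le> real m1 ^ (k - 2) / beta k m2 + real m2 ^ (k - 2) / beta k m1"
  proof (cases "real m2 \<ge> real k / 2 * ln (real k)")
    case True
    have "real m1 \<ge> real k / 2 * ln (real k)" using True le by linarith
    then show ?thesis using caseb[OF k3 m1 m2 beta_big[OF k3 m1] beta_big[OF k3 m2 True]] by simp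
  next
    case False
    define m where "m = real (m1 + m2)"
    define x where "x = real m2 / m"
    define D where "D = k - 2"
    have MM: "2 * real k * L \<le> m" using M by (simp add: m_def L_def)
    have Mpos: "2 * real k * L > 0" using kp L4 by simp
    have mpos: "m > 0" using MM Mpos by linarith
    have x0: "0 \<le> x" using mpos by (simp add: x_def)
    have xM: "x \<le> real m2 / (2 * real k * L)"
    proof -
      have "0 < m * (2 * real k * L)" using mpos Mpos by simp
      then show ?thesis unfolding x_def using MM by (intro divide_left_mono) auto
    qed
    have m2J: "real m2 \<le> real k / 2 * L" using False by (simp add: L_def)
    have x4: "x \<le> 1/4"
    proof -
      have "real m2 / (2 * real k * L) \<le> (real k / 2 * L) / (2 * real k * L)"
        using m2J Mpos by (intro divide_right_mono) auto
      also have "\<dots> = 1/4" using kp L4 by (simp add: field_simps)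
      finally show ?thesis using xM by linarith
    qed
    have Dx: "real D * x \<le> real m2 / (2 * L)"
    proof -
      have "real D * x \<le> real k * (real m2 / (2 * real k * L))"
        using xM x0 by (intro mult_mono) (auto simp: D_def)
      also have "\<dots> = real m2 / (2 * L)" using kp by (simp add: field_simps)
      finally show ?thesis .
    qed
    have E: "exp (- (3 * real m2) / (4 * L)) \<le> (1 - x) ^ D"
    proof -
      have "- (3 * real m2) / (4 * L) \<le> -(3/2) * real D * x"
      proof -
        have "(3/2) * (real D * x) \<le> (3/2) * (real m2 / (2 * L))" using Dx by simp
        moreover have "(3/2) * (real m2 / (2 * L)) = (3 * real m2) / (4 * L)" using L4 by (simp add: field_simps)
        ultimately show ?thesis by simp
      qed
      then have "exp (- (3 * real m2) / (4 * L)) \<le> exp (-(3/2) * real D * x)" by simp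
      also have "\<dots> \<le> (1 - x) ^ D" by (rule expbound[OF x0 x4])
      finally show ?thesis .
    qed
    have eq1: "1 - x = real m1 / real (m1 + m2)"
      using mpos unfolding x_def m_def by (simp add: field_simps)
    have goal: "beta k m2 \<le> (1 - x) ^ D"
    proof (cases "m2 \<le> 21")
      case True
      have "beta k m2 \<le> 1 / real k" by (rule beta_le_k[OF m2])
      also have "1 / real k = exp (- L)"
        using kp by (simp add: L_def exp_minus divide_inverse)
      also have "exp (- L) \<le> exp (- (3 * real m2) / (4 * L))"
      proof -
        have "3 * real m2 \<le> 63" using True by simp
        also have "63 \<le> 4 * L * L" using L4 mult_mono[OF L4 L4] by simp
        finally have "3 * real m2 \<le> 4 * L * L" .
        then have "(3 * real m2) / (4 * L) \<le> L" using L4 by (simp add: field_simps)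
        then show ?thesis by simp
      qed
      finally show ?thesis using E by linarith
    next
      case False
      show ?thesis
      proof (cases "2 * m2 \<le> k")
        case True
        have "beta k m2 \<le> 2 * exp (- real m2 / 2)"
          using beta_le_gamma[OF m2, of k] gamma_mid[of k m2] True k by linarith
        also have "2 * exp (- real m2 / 2) = exp (ln 2 + (- real m2 / 2))"
          by (simp only: exp_add) simp
        also have "\<dots> \<le> exp (- (3 * real m2) / (4 * L))"
        proof -
          have l2: "ln (2::real) \<le> 1" using ln_le_minus_one[of 2] by simp
          have "(3 * real m2) / (4 * L) \<le> (3 * real m2) / 16"
            using L4 by (intro divide_left_mono) auto
          moreover have "real m2 \<ge> 22" using False by simp
          ultimately have "ln 2 + (- real m2 / 2) \<le> - (3 * real m2) / (4 * L)" using l2 by simp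
          then show ?thesis by simp
        qed
        finally show ?thesis using E by linarith
      next
        case False
        have "beta k m2 \<le> 2 * (7 / 10) ^ k"
          using beta_le_gamma[OF m2, of k] gamma_far[of k m2] False k by linarith
        also have "2 * (7 / 10) ^ k = (98 / 100) * (7 / 10 :: real) ^ D"
        proof -
          have "k = D + 2" using k by (simp add: D_def)
          then show ?thesis by (simp add: power_add)
        qed
        also have "\<dots> \<le> (3 / 4) ^ D"
        proof -
          have "(7 / 10 :: real) ^ D \<le> (3 / 4) ^ D" by (rule power_mono) auto
          moreover have "(7 / 10 :: real) ^ D \<ge> 0" by simp
          ultimately show ?thesis by linarith
        qed
        also have "\<dots> \<le> (1 - x) ^ D" by (rule power_mono) (use x4 in auto)
        finally show ?thesis .
      qed
    qed
    then show ?thesis using casea[of k m2 m1] k m1 eq1 by (simp add: D_def)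
  qed
qed



definition Gf :: "nat \<Rightarrow> real \<Rightarrow> nat \<Rightarrow> real" where
  "Gf k M m = (if m = 0 then 0 else max (real k) (2 * real k * (real m / M) ^ (k - 2)))"

lemma beta0: "beta k 0 = 1" by (simp add: beta_def)

lemma Gf_nn: "Gf k M m \<ge> 0" by (simp add: Gf_def le_max_iff_disj)

lemma G_rec:
  assumes k: "k \<ge> 3" and M: "M \<ge> 2" and H: "H k M"
  shows "Gf k M (m1 + m2) \<le> Gf k M m1 / beta k m2 + Gf k M m2 / beta k m1"
proof (cases "m1 = 0 \<or> m2 = 0")
  case True
  then show ?thesis by (auto simp: beta0 Gf_def)
next
  case False
  then have m1: "m1 \<ge> 1" and m2: "m2 \<ge> 1" by auto
  have k1: "k \<ge> 1" using k by simp
  have bp1: "0 < beta k m1" and bp2: "0 < beta k m2" using beta_pos[OF k1] by auto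
  have bl1: "beta k m1 \<le> 1" and bl2: "beta k m2 \<le> 1" using beta_le1[OF k1] by auto
  let ?D = "k - 2"
  have Mp: "M > 0" using M by simp
  define g1 where "g1 = Gf k M m1"
  define g2 where "g2 = Gf k M m2"
  have g1k: "g1 \<ge> real k" and g2k: "g2 \<ge> real k" using m1 m2 by (auto simp: g1_def g2_def Gf_def)
  have g1p: "g1 \<ge> 2 * real k * (real m1 / M) ^ ?D" and g2p: "g2 \<ge> 2 * real k * (real m2 / M) ^ ?D"
    using m1 m2 by (auto simp: g1_def g2_def Gf_def)
  have r1: "g1 \<le> g1 / beta k m2" using g1k bp2 bl2 k1
    by (simp add: field_simps)
  have r2: "g2 \<le> g2 / beta k m1" using g2k bp1 bl1 k1
    by (simp add: field_simps)
  have R1: "2 * real k \<le> g1 / beta k m2 + g2 / beta k m1" using r1 r2 g1k g2k by linarith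
  have R2: "2 * real k / M ^ ?D * (real m1 ^ ?D / beta k m2 + real m2 ^ ?D / beta k m1)
      \<le> g1 / beta k m2 + g2 / beta k m1"
  proof -
    have "2 * real k / M ^ ?D * (real m1 ^ ?D / beta k m2 + real m2 ^ ?D / beta k m1)
       = (2 * real k * (real m1 / M) ^ ?D) / beta k m2 + (2 * real k * (real m2 / M) ^ ?D) / beta k m1"
      using bp1 bp2 Mp by (simp add: power_divide field_simps)
    also have "\<dots> \<le> g1 / beta k m2 + g2 / beta k m1"
      using g1p g2p bp1 bp2 by (intro add_mono divide_right_mono) auto
    finally show ?thesis .
  qed
  show ?thesis
  proof (cases "2 * real k * (real (m1 + m2) / M) ^ ?D \<le> 2 * real k")
    case True
    then have "Gf k M (m1 + m2) \<le> 2 * real k" using m1 by (simp add: Gf_def)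
    then show ?thesis using R1 unfolding g1_def g2_def by linarith
  next
    case False
    have "(real (m1 + m2) / M) ^ ?D > 1" using False k by simp
    then have "real (m1 + m2) / M > 1"
      by (metis less_le_not_le not_le power_le_one zero_le_divide_iff of_nat_0_le_iff Mp order_less_imp_le)
    then have mM: "M \<le> real (m1 + m2)" using Mp by (simp add: field_simps)
    have Hm: "real (m1 + m2) ^ ?D \<le> real m1 ^ ?D / beta k m2 + real m2 ^ ?D / beta k m1"
      using H m1 m2 mM unfolding H_def by blast
    have "Gf k M (m1 + m2) = 2 * real k * (real (m1 + m2) / M) ^ ?D"
      using False m1 by (simp add: Gf_def)
    also have "\<dots> = 2 * real k / M ^ ?D * real (m1 + m2) ^ ?D" by (simp add: power_divide)
    also have "\<dots> \<le> 2 * real k / M ^ ?D * (real m1 ^ ?D / beta k m2 + real m2 ^ ?D / beta k m1)"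
      using Hm Mp by (intro mult_left_mono) auto
    also have "\<dots> \<le> g1 / beta k m2 + g2 / beta k m1" by (rule R2)
    finally show ?thesis unfolding g1_def g2_def .
  qed
qed

fun wexp :: "nat list \<Rightarrow> rexp" where
  "wexp [] = Eps"
| "wexp (a # w) = Conc (Let a) (wexp w)"

lemma lang_wexp: "lang (wexp w) = {w}"
  by (induction w) auto

lemma lang_exists:
  assumes "finite A" "A \<noteq> {}"
  shows "\<exists>r. lang r = A"
  using assms
proof (induction A rule: finite_ne_induct)
  case (singleton x)
  then show ?case using lang_wexp by blast
next
  case (insert x F)
  then obtain r where "lang r = F" by blast
  then have "lang (Union (wexp x) r) = insert x F" by (simp add: lang_wexp)
  then show ?case by blast
qed

lemma nodes_pos: "nodes r \<ge> 1"
  by (cases r) auto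

lemma L_even_eq: "L_even n k = {w \<in> W k n. ok k (\<lambda>_. 0) w}"
  unfolding L_even_def W_def ok_def by auto

lemma count_replicate1: "count_list (replicate n (Suc 0)) j = (if j = Suc 0 then n else 0)"
  by (induction n) auto

lemma L_even_ne: "even n \<Longrightarrow> k \<ge> 1 \<Longrightarrow> replicate n 1 \<in> L_even n k"
  unfolding L_even_def by (auto simp: count_replicate1)

lemma rpn_attained:
  assumes "even n" "k \<ge> 1"
  shows "\<exists>r. lang r = L_even n k \<and> nodes r = rpn (L_even n k)"
proof -
  have fin: "finite (L_even n k)" unfolding L_even_eq using finite_W by simp
  obtain r where r: "lang r = L_even n k" using lang_exists[OF fin] L_even_ne[OF assms] by blast
  have "\<exists>s r. lang r = L_even n k \<and> nodes r = s" using r by blast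
  then show ?thesis unfolding rpn_def by (rule LeastI_ex)
qed

lemma rpn_ge1:
  assumes "even n" "k \<ge> 1"
  shows "real (rpn (L_even n k)) \<ge> 1"
  using rpn_attained[OF assms] nodes_pos by (metis of_nat_1 of_nat_le_iff)

lemma phom_L: "phom (L_even n k)"
  unfolding phom_def L_even_def
proof (intro ballI allI)
  fix u v a assume u: "u \<in> {w. length w = n \<and> set w \<subseteq> {1..k} \<and> (\<forall>j\<in>{1..k}. even (count_list w j))}"
    and v: "v \<in> {w. length w = n \<and> set w \<subseteq> {1..k} \<and> (\<forall>j\<in>{1..k}. even (count_list w j))}"
  show "even (count_list u a) = even (count_list v a)"
  proof (cases "a \<in> {1..k}")
    case True
    then show ?thesis using u v by auto
  next
    case False
    then have "a \<notin> set u" "a \<notin> set v" using u v by auto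
    then show ?thesis by simp
  qed
qed

lemma rpn_bound:
  assumes k: "k \<ge> 3" and M: "M \<ge> 2" and H: "H k M" and n: "even n" "n \<ge> 1"
  shows "2 * real k * (real n / M) ^ (k - 2) / 2 ^ (k - 1) \<le> real (rpn (L_even n k))"
proof -
  have k1: "k \<ge> 1" using k by simp
  obtain r where r: "lang r = L_even n k" "nodes r = rpn (L_even n k)"
    using rpn_attained[OF n(1) k1] by blast
  have G1: "Gf k M 1 \<le> real k"
  proof -
    have Mp: "0 < M" using M by simp
    have "(1 / M) ^ (k - 2) \<le> 1 / M"
    proof -
      have "(1 / M) ^ (k - 2) \<le> (1 / M) ^ 1"
        by (rule power_decreasing) (use k M in auto)
      then show ?thesis by simp
    qed
    also have "1 / M \<le> 1 / 2" using M by (simp add: field_simps)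
    finally have "2 * real k * (1 / M) ^ (k - 2) \<le> 2 * real k * (1 / 2)"
      by (intro mult_left_mono) auto
    then have "2 * real k * (1 / M) ^ (k - 2) \<le> real k" by simp
    then show ?thesis by (simp add: Gf_def)
  qed
  have main': "real (card (lang r)) * Gf k M n \<le> real (nodes r) * real k ^ n"
    by (rule main[OF k1 _ G1 Gf_nn G_rec[OF k M H]])
       (auto simp: Gf_def r(1) L_even_eq phom_L[unfolded L_even_eq])
  have cl: "real k ^ n / 2 ^ (k - 1) \<le> real (card (lang r))"
  proof -
    have "2 * real k ^ n \<le> real (card (lang r)) * 2 ^ k"
      using fourier_lower[OF n(1) k1] r(1) L_even_eq by simp
    moreover have "(2::real) ^ k = 2 * 2 ^ (k - 1)"
    proof -
      define t where "t = k - 1"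
      have t: "k = t + 1" using k by (simp add: t_def)
      show ?thesis unfolding t by simp
    qed
    ultimately show ?thesis by (simp add: field_simps)
  qed
  have Gn: "2 * real k * (real n / M) ^ (k - 2) \<le> Gf k M n" using n by (simp add: Gf_def)
  have kn: "real k ^ n > 0" using k by simp
  have "real k ^ n / 2 ^ (k - 1) * (2 * real k * (real n / M) ^ (k - 2)) \<le> real (card (lang r)) * Gf k M n"
    using cl Gn M by (intro mult_mono) auto
  also have "\<dots> \<le> real (rpn (L_even n k)) * real k ^ n" using main' r(2) by simp
  finally have c: "real k ^ n / 2 ^ (k - 1) * (2 * real k * (real n / M) ^ (k - 2)) \<le> real k ^ n * real (rpn (L_even n k))"
    by (simp add: mult.commute)
  have eq: "real k ^ n / 2 ^ (k - 1) * (2 * real k * (real n / M) ^ (k - 2)) = real k ^ n * (2 * real k * (real n / M) ^ (k - 2) / 2 ^ (k - 1))"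
    by simp
  show ?thesis using c unfolding eq using mult_le_cancel_left_pos[OF kn] by blast
qed

definition cc :: real where "cc = (1 / 3200) ^ 78 / 2"

lemma cc_pos: "cc > 0" by (simp add: cc_def)
lemma cc_le1: "cc \<le> 1"
proof -
  have "(1/3200::real) ^ 78 \<le> 1" by (rule power_le_one) auto
  then show ?thesis unfolding cc_def by linarith
qed

lemma pow2k: "k \<ge> 2 \<Longrightarrow> (2::real) ^ (k - 1) = 2 * 2 ^ (k - 2)"
proof -
  assume k: "k \<ge> 2"
  define t where "t = k - 2"
  have t: "k = t + 2" using k by (simp add: t_def)
  show ?thesis unfolding t by simp
qed

lemma small_final:
  assumes k: "3 \<le> k" "k \<le> 80" and X: "X \<ge> 0" and L: "L \<ge> 1"
  shows "cc * X ^ (k - 2) / (4 * real k * L) ^ (k - 2) \<le> 2 * real k * (X / real k ^ 3) ^ (k - 2) / 2 ^ (k - 1)"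
proof -
  define D where "D = k - 2"
  have kr: "real k \<ge> 3" "real k \<le> 80" using k by auto
  have D78: "D \<le> 78" using k by (simp add: D_def)
  have q0: "0 \<le> real k ^ 2 / 2" by simp
  have q1: "real k ^ 2 / 2 \<le> 3200"
  proof -
    have "real k ^ 2 \<le> 80 ^ 2" using kr by (intro power_mono) auto
    then show ?thesis by simp
  qed
  have "(real k ^ 2 / 2) ^ D \<le> 3200 ^ D" using q1 q0 by (rule power_mono)
  also have "(3200::real) ^ D \<le> 3200 ^ 78" using D78 by (intro power_increasing) auto
  finally have Y: "(real k ^ 2 / 2) ^ D \<le> 3200 ^ 78" .
  have one: "(1 / 3200 :: real) ^ 78 * 3200 ^ 78 = 1"
    by (simp only: power_mult_distrib[symmetric]) simp
  have "cc * (real k ^ 2 / 2) ^ D \<le> cc * 3200 ^ 78"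
    using Y cc_pos by (intro mult_left_mono) auto
  also have "cc * 3200 ^ 78 = 1 / 2" unfolding cc_def using one by simp
  finally have A: "cc * (real k ^ 2 / 2) ^ D \<le> 1" by simp
  define P where "P = (4 * real k) ^ D"
  define Q where "Q = (2 * real k ^ 3) ^ D"
  have Pp: "P > 0" and Qp: "Q > 0" using kr by (auto simp: P_def Q_def)
  have f: "4 * real k * (real k ^ 2 / 2) = 2 * real k ^ 3" by (simp add: power2_eq_square power3_eq_cube)
  have PQ: "P * (real k ^ 2 / 2) ^ D = Q"
    unfolding P_def Q_def f[symmetric] by (rule power_mult_distrib[symmetric])
  have XD: "X ^ D \<ge> 0" using X by simp
  have "cc * X ^ D / (4 * real k * L) ^ D \<le> cc * X ^ D / P"
  proof -
    have "P \<le> (4 * real k * L) ^ D" unfolding P_def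
      using kr L by (intro power_mono) (auto simp: mult_le_cancel_left1)
    then show ?thesis using Pp XD cc_pos by (intro divide_left_mono) auto
  qed
  also have "cc * X ^ D / P = (cc * (real k ^ 2 / 2) ^ D) * X ^ D / Q"
    using Pp Qp PQ[symmetric] kr by (simp add: field_simps)
  also have "\<dots> \<le> 1 * X ^ D / Q"
    using A XD Qp by (intro divide_right_mono mult_right_mono) auto
  also have "\<dots> \<le> real k * X ^ D / Q"
    using XD Qp kr by (intro divide_right_mono mult_right_mono) auto
  also have "real k * X ^ D / Q = 2 * real k * (X / real k ^ 3) ^ D / (2 * 2 ^ D)"
  proof -
    have g: "Q = 2 ^ D * (real k ^ 3) ^ D" unfolding Q_def by (rule power_mult_distrib)
    have h: "(X / real k ^ 3) ^ D = X ^ D / (real k ^ 3) ^ D" by (rule power_divide)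
    have pp: "(real k ^ 3) ^ D > 0" using kr by simp
    show ?thesis unfolding g h using pp by (simp add: field_simps)
  qed
  finally show ?thesis using pow2k[of k] k by (simp add: D_def)
qed

lemma large_final:
  assumes k: "k \<ge> 2" and X: "X \<ge> 0" and L: "L > 0"
  shows "cc * X ^ (k - 2) / (4 * real k * L) ^ (k - 2) \<le> 2 * real k * (X / (2 * real k * L)) ^ (k - 2) / 2 ^ (k - 1)"
proof -
  define D where "D = k - 2"
  have kr: "real k \<ge> 2" using k by simp
  have e: "2 * real k * (X / (2 * real k * L)) ^ D / (2 * 2 ^ D) = real k * X ^ D / (4 * real k * L) ^ D"
  proof -
    have f: "4 * real k * L = 2 * (2 * real k * L)" by simp
    have g: "(4 * real k * L) ^ D = 2 ^ D * (2 * real k * L) ^ D"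
      by (subst f) (rule power_mult_distrib)
    have h: "(X / (2 * real k * L)) ^ D = X ^ D / (2 * real k * L) ^ D" by (rule power_divide)
    have pp: "(2 * real k * L) ^ D > 0" using kr L by simp
    show ?thesis unfolding g h using pp by (simp add: field_simps)
  qed
  have "cc * X ^ D / (4 * real k * L) ^ D \<le> real k * X ^ D / (4 * real k * L) ^ D"
    using cc_le1 kr X L by (intro divide_right_mono mult_right_mono) auto
  then show ?thesis using e pow2k[OF k] by (simp add: D_def)
qed

theorem theorem7p3:
  shows "\<exists>c>0. \<forall>n k. even n \<and> k \<ge> 2 \<longrightarrow>
     real (rpn (L_even n k)) \<ge>
       c * real n ^ (k - 2) / (4 * real k * ln (real k)) ^ (k - 2)"
proof (intro exI[of _ cc] conjI allI impI)
  show "cc > 0" by (rule cc_pos)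
  fix n k :: nat assume a: "even n \<and> k \<ge> 2"
  then have n: "even n" and k2: "k \<ge> 2" by auto
  have k1: "k \<ge> 1" using k2 by simp
  have r1: "real (rpn (L_even n k)) \<ge> 1" by (rule rpn_ge1[OF n k1])
  show "cc * real n ^ (k - 2) / (4 * real k * ln (real k)) ^ (k - 2) \<le> real (rpn (L_even n k))"
  proof (cases "k = 2")
    case True
    then show ?thesis using r1 cc_le1 by simp
  next
    case False
    then have k3: "k \<ge> 3" using k2 by simp
    have L1: "ln (real k) \<ge> 1"
    proof -
      have "ln (3::real) \<le> ln (real k)" using k3 by simp
      then show ?thesis using ln3_ge1 by linarith
    qed
    show ?thesis
    proof (cases "n = 0")
      case True
      have d: "k - 2 \<noteq> 0" using k3 by simp
      have "real n ^ (k - 2) = 0" using True d by simp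
      then have "cc * real n ^ (k - 2) / (4 * real k * ln (real k)) ^ (k - 2) = 0" by simp
      then show ?thesis using r1 by linarith
    next
      case False
      then have n1: "n \<ge> 1" by simp
      show ?thesis
      proof (cases "k \<ge> 81")
        case True
        have M2: "2 * real k * ln (real k) \<ge> 2"
        proof -
          have "2 * 1 * 1 \<le> 2 * real k * ln (real k)" using k1 L1 by (intro mult_mono) auto
          then show ?thesis by simp
        qed
        have "cc * real n ^ (k - 2) / (4 * real k * ln (real k)) ^ (k - 2)
            \<le> 2 * real k * (real n / (2 * real k * ln (real k))) ^ (k - 2) / 2 ^ (k - 1)"
          using L1 by (intro large_final[OF k2]) auto
        also have "\<dots> \<le> real (rpn (L_even n k))"
          by (rule rpn_bound[OF k3 M2 H_large[OF True] n n1])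
        finally show ?thesis .
      next
        case False
        have M2: "real k ^ 3 \<ge> 2"
        proof -
          have "(1::real) ^ 3 \<le> real k ^ 3" using k1 by (intro power_mono) auto
          moreover have "(2::real) \<le> 3 ^ 3" by simp
          moreover have "(3::real) ^ 3 \<le> real k ^ 3" using k3 by (intro power_mono) auto
          ultimately show ?thesis by linarith
        qed
        have "cc * real n ^ (k - 2) / (4 * real k * ln (real k)) ^ (k - 2)
            \<le> 2 * real k * (real n / real k ^ 3) ^ (k - 2) / 2 ^ (k - 1)"
          using L1 False k3 by (intro small_final) auto
        also have "\<dots> \<le> real (rpn (L_even n k))"
          by (rule rpn_bound[OF k3 M2 H_small[OF k3] n n1])
        finally show ?thesis .
      qed
    qed
  qed
qed

end
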